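(* Let $((A_i,B_i))_{i\in\mathbb N}$ be an increasing sequence of oriented separations of a locally finite graph $G$ whose underlying separations are tight, and let $(A,B)=(\bigcup_iA_i,\bigcap_iB_i)$. If $B\neq\emptyset$, then every $v\in A\cap B$ has a neighbour $w\in B\setminus A$ such that for infinitely many $i\in\mathbb N$ the vertex $w$ lies in a tight component $K_i$ of $G-(A_i\cap B_i)$ with $V(K_i)\subseteq B_i\setminus A_i$. In particular, $N_G(B\setminus A)=A\cap B$.
   Context: A separation of $G$ is an unordered pair $\{A,B\}$ of subsets of $V(G)$ with $A\cup B=V(G)$ and no edge between $A\setminus B$ and $B\setminus A$; oriented separations are ordered by $(A,B)\le(C,D)$ iff $A\subseteq C$ and $B\supseteq D$. For $X\subseteq V(G)$, a component $K$ of $G-X$ is tight if $N_G(K)=X$. A separation $\{A,B\}$ is tight if both $A\setminus B$ and $B\setminus A$ contain the vertex set of a tight component of $G-(A\cap B)$. *)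

theory Defs
  imports Main
begin

definition graph :: "'a set \<Rightarrow> ('a \<Rightarrow> 'a \<Rightarrow> bool) \<Rightarrow> bool" where
  "graph V E \<longleftrightarrow> (\<forall>x y. E x y \<longrightarrow> x \<in> V \<and> y \<in> V \<and> E y x \<and> x \<noteq> y)"

definition locally_finite :: "'a set \<Rightarrow> ('a \<Rightarrow> 'a \<Rightarrow> bool) \<Rightarrow> bool" where
  "locally_finite V E \<longleftrightarrow> (\<forall>v\<in>V. finite {w. E v w})"

definition nbh :: "'a set \<Rightarrow> ('a \<Rightarrow> 'a \<Rightarrow> bool) \<Rightarrow> 'a set \<Rightarrow> 'a set" where
  "nbh V E S = {w \<in> V - S. \<exists>s\<in>S. E s w}"

definition component :: "'a set \<Rightarrow> ('a \<Rightarrow> 'a \<Rightarrow> bool) \<Rightarrow> 'a set \<Rightarrow> 'a set \<Rightarrow> bool" where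
  "component V E X K \<longleftrightarrow>
     (\<exists>x \<in> V - X. K = {y. (\<lambda>a b. E a b \<and> a \<in> V - X \<and> b \<in> V - X)\<^sup>*\<^sup>* x y})"

definition tight_component :: "'a set \<Rightarrow> ('a \<Rightarrow> 'a \<Rightarrow> bool) \<Rightarrow> 'a set \<Rightarrow> 'a set \<Rightarrow> bool" where
  "tight_component V E X K \<longleftrightarrow> component V E X K \<and> nbh V E K = X"

text \<open>{A,B} is a separation (orientation irrelevant for this predicate).\<close>
definition separation :: "'a set \<Rightarrow> ('a \<Rightarrow> 'a \<Rightarrow> bool) \<Rightarrow> 'a set \<Rightarrow> 'a set \<Rightarrow> bool" where
  "separation V E A B \<longleftrightarrow> A \<union> B = V \<and> (\<forall>x\<in>A - B. \<forall>y\<in>B - A. \<not> E x y)"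

definition tight_separation :: "'a set \<Rightarrow> ('a \<Rightarrow> 'a \<Rightarrow> bool) \<Rightarrow> 'a set \<Rightarrow> 'a set \<Rightarrow> bool" where
  "tight_separation V E A B \<longleftrightarrow> separation V E A B \<and>
     (\<exists>K. tight_component V E (A \<inter> B) K \<and> K \<subseteq> A - B) \<and>
     (\<exists>K. tight_component V E (A \<inter> B) K \<and> K \<subseteq> B - A)"

definition sep_le :: "'a set \<times> 'a set \<Rightarrow> 'a set \<times> 'a set \<Rightarrow> bool" where
  "sep_le AB CD \<longleftrightarrow> fst AB \<subseteq> fst CD \<and> snd CD \<subseteq> snd AB"

end

theory Submission
  imports Defs
begin

lemma pigeon_inf:
  assumes "finite S" and "\<And>i. i \<ge> (j::nat) \<Longrightarrow> \<exists>w\<in>S. P i w"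
  shows "\<exists>w\<in>S. infinite {i. P i w}"
proof (rule ccontr)
  assume "\<not> ?thesis"
  hence "finite (\<Union>w\<in>S. {i. P i w})" using assms(1) by auto
  moreover have "{j..} \<subseteq> (\<Union>w\<in>S. {i. P i w})" using assms(2) by auto
  ultimately show False using infinite_Ici finite_subset by blast
qed

theorem mainTheorem7:
  fixes V :: "'a set" and E :: "'a \<Rightarrow> 'a \<Rightarrow> bool"
    and As Bs :: "nat \<Rightarrow> 'a set"
  assumes "graph V E" and "locally_finite V E"
    and "\<And>i. tight_separation V E (As i) (Bs i)"
    and "\<And>i j. i \<le> j \<Longrightarrow> sep_le (As i, Bs i) (As j, Bs j)"
    and "(\<Inter>i. Bs i) \<noteq> {}"
  shows "(\<forall>v \<in> (\<Union>i. As i) \<inter> (\<Inter>i. Bs i).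
            \<exists>w. E v w \<and> w \<in> (\<Inter>i. Bs i) - (\<Union>i. As i) \<and>
                infinite {i. \<exists>K. tight_component V E (As i \<inter> Bs i) K \<and> w \<in> K
                                  \<and> K \<subseteq> Bs i - As i})
       \<and> nbh V E ((\<Inter>i. Bs i) - (\<Union>i. As i)) = (\<Union>i. As i) \<inter> (\<Inter>i. Bs i)"
proof -
  have mA: "As i \<subseteq> As j" and mB: "Bs j \<subseteq> Bs i" if "i \<le> j" for i j
    using assms(4)[OF that] by (auto simp: sep_le_def)
  have sep: "separation V E (As i) (Bs i)" for i
    using assms(3) by (auto simp: tight_separation_def)
  have sym: "E x y \<Longrightarrow> E y x" for x y using assms(1) by (auto simp: graph_def)
  define P where "P i w = (\<exists>K. tight_component V E (As i \<inter> Bs i) K \<and> w \<in> K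
                                  \<and> K \<subseteq> Bs i - As i)" for i w
  have part1: "\<exists>w. E v w \<and> w \<in> (\<Inter>i. Bs i) - (\<Union>i. As i) \<and> infinite {i. P i w}"
    if v: "v \<in> (\<Union>i. As i) \<inter> (\<Inter>i. Bs i)" for v
  proof -
    from v obtain j where vj: "v \<in> As j" by auto
    have vV: "v \<in> V" using sep[of j] vj by (auto simp: separation_def)
    have fin: "finite {w. E v w}" using assms(2) vV by (auto simp: locally_finite_def)
    have "\<exists>w\<in>{w. E v w}. P i w" if "i \<ge> j" for i
    proof -
      obtain K where K: "tight_component V E (As i \<inter> Bs i) K" "K \<subseteq> Bs i - As i"
        using assms(3)[of i] by (auto simp: tight_separation_def)
      have "v \<in> As i \<inter> Bs i" using mA[OF that] vj v by auto
      hence "v \<in> nbh V E K" using K(1) by (auto simp: tight_component_def)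
      then obtain s where "s \<in> K" "E s v" by (auto simp: nbh_def)
      thus ?thesis using K sym unfolding P_def by blast
    qed
    then obtain w where w: "E v w" "infinite {i. P i w}"
      using pigeon_inf[OF fin] by blast
    have "w \<in> Bs i \<and> w \<notin> As i" for i
    proof -
      have "\<exists>i'. i' \<ge> i \<and> P i' w"
        proof (rule ccontr)
        assume "\<not> ?thesis"
        hence "{i. P i w} \<subseteq> {..<i}" using not_le by auto
        thus False using w(2) finite_subset finite_lessThan by metis
      qed
      then obtain i' where ii: "i' \<ge> i" "P i' w" by blast
      then obtain K where "w \<in> K" "K \<subseteq> Bs i' - As i'" unfolding P_def by blast
      hence "w \<in> Bs i'" "w \<notin> As i'" by auto
      thus ?thesis using mA[OF ii(1)] mB[OF ii(1)] by blast
    qed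
    thus ?thesis using w by blast
  qed
  have part2: "nbh V E ((\<Inter>i. Bs i) - (\<Union>i. As i)) = (\<Union>i. As i) \<inter> (\<Inter>i. Bs i)"
  proof
    show "nbh V E ((\<Inter>i. Bs i) - (\<Union>i. As i)) \<subseteq> (\<Union>i. As i) \<inter> (\<Inter>i. Bs i)"
    proof
      fix x assume "x \<in> nbh V E ((\<Inter>i. Bs i) - (\<Union>i. As i))"
      then obtain s where x: "x \<in> V" "x \<notin> (\<Inter>i. Bs i) - (\<Union>i. As i)"
        and s: "s \<in> (\<Inter>i. Bs i) - (\<Union>i. As i)" "E s x" by (auto simp: nbh_def)
      have "x \<in> Bs i" for i
      proof (rule ccontr)
        assume "x \<notin> Bs i"
        hence "x \<in> As i - Bs i" using sep[of i] x(1) by (auto simp: separation_def)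
        moreover have "s \<in> Bs i - As i" using s by auto
        ultimately show False using sep[of i] sym[OF s(2)] by (auto simp: separation_def)
      qed
      thus "x \<in> (\<Union>i. As i) \<inter> (\<Inter>i. Bs i)" using x by auto
    qed
  next
    show "(\<Union>i. As i) \<inter> (\<Inter>i. Bs i) \<subseteq> nbh V E ((\<Inter>i. Bs i) - (\<Union>i. As i))"
    proof
      fix v assume v: "v \<in> (\<Union>i. As i) \<inter> (\<Inter>i. Bs i)"
      then obtain j where "v \<in> As j" by auto
      hence "v \<in> V" using sep[of j] by (auto simp: separation_def)
      moreover obtain w where w: "E v w" "w \<in> (\<Inter>i. Bs i) - (\<Union>i. As i)" using part1[OF v] by blast
      moreover have "v \<notin> (\<Inter>i. Bs i) - (\<Union>i. As i)" using v by blast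
      moreover have "E w v" using sym[OF w(1)] .
      ultimately show "v \<in> nbh V E ((\<Inter>i. Bs i) - (\<Union>i. As i))"
        unfolding nbh_def by blast
    qed
  qed
  have "\<forall>v \<in> (\<Union>i. As i) \<inter> (\<Inter>i. Bs i).
            \<exists>w. E v w \<and> w \<in> (\<Inter>i. Bs i) - (\<Union>i. As i) \<and> infinite {i. P i w}"
    using part1 by blast
  thus ?thesis using part2 unfolding P_def by simp
qed

end
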